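(* Let $T=(T_1,\dots,T_l)$ be a finite collection of differential operators with constant coefficients on $\mathbb{T}^2$ such that for every admissible line $\Lambda$ the $\Lambda$-senior parts of $T_1,\dots,T_l$ span a linear space of dimension at most $1$. Then the principal parts of all $T_j$ are scalar multiples of a single operator.
   Context: $\partial_1,\partial_2$ are the derivatives on $\mathbb{T}^2$ (parametrised by $t\mapsto e^{2\pi it}$). Let $\mathcal{M}\subset\mathbb{Z}_{\geqslant0}^2$ be the (nonempty) set of biindices $(\alpha,\beta)$ of monomials $\partial_1^\alpha\partial_2^\beta$ occurring with nonzero coefficient in at least one $T_j$. A straight line $\Lambda$ is admissible if it passes through at least two points of $\mathcal{M}$, intersects both positive coordinate semiaxes, and no point of $\mathcal{M}$ lies strictly above it. The $\Lambda$-senior part of an operator is the sum of its terms whose biindices lie on $\Lambda$. If admissible lines exist, the core is the union over all admissible lines $\Lambda$ of the convex hull of $\Lambda\cap\mathcal{M}$; if none exist, the core is the single point of $\mathcal{M}$ that dominates every point of $\mathcal{M}$ coordinatewise. The principal part of $T_j$ is the sum of the terms of $T_j$ whose biindices lie in the core. *)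

theory Defs
  imports "HOL-Analysis.Analysis"
begin

text \<open>A differential operator with constant coefficients on the 2-torus,
  sum of c(a,b) d1^a d2^b, is represented by its coefficient function
  nat \<times> nat \<Rightarrow> complex (finitely supported).\<close>

type_synonym diffop = "nat \<times> nat \<Rightarrow> complex"

definition pt :: "nat \<times> nat \<Rightarrow> real \<times> real" where
  "pt m = (real (fst m), real (snd m))"

definition is_line :: "(real \<times> real) set \<Rightarrow> bool" where
  "is_line L \<longleftrightarrow> (\<exists>a b c. (a, b) \<noteq> (0, 0) \<and> L = {(x, y). a * x + b * y = c})"

definition strictly_above :: "(real \<times> real) set \<Rightarrow> real \<times> real \<Rightarrow> bool" where
  "strictly_above L p \<longleftrightarrow> (\<exists>y'. (fst p, y') \<in> L \<and> y' < snd p)"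

definition biindices :: "nat \<Rightarrow> (nat \<Rightarrow> diffop) \<Rightarrow> (nat \<times> nat) set" where
  "biindices l T = {m. \<exists>j<l. T j m \<noteq> 0}"

definition admissible :: "(nat \<times> nat) set \<Rightarrow> (real \<times> real) set \<Rightarrow> bool" where
  "admissible M L \<longleftrightarrow> is_line L
     \<and> (\<exists>m1\<in>M. \<exists>m2\<in>M. m1 \<noteq> m2 \<and> pt m1 \<in> L \<and> pt m2 \<in> L)
     \<and> (\<exists>x>0. (x, 0) \<in> L) \<and> (\<exists>y>0. (0, y) \<in> L)
     \<and> (\<forall>m\<in>M. \<not> strictly_above L (pt m))"

definition senior_part :: "(real \<times> real) set \<Rightarrow> diffop \<Rightarrow> diffop" where
  "senior_part L P = (\<lambda>m. if pt m \<in> L then P m else 0)"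

definition core :: "(nat \<times> nat) set \<Rightarrow> (real \<times> real) set" where
  "core M = (if \<exists>L. admissible M L
     then (\<Union>L\<in>{L. admissible M L}. convex hull (pt ` (M \<inter> {m. pt m \<in> L})))
     else pt ` {m\<in>M. \<forall>m'\<in>M. fst m' \<le> fst m \<and> snd m' \<le> snd m})"

definition principal_part :: "(nat \<times> nat) set \<Rightarrow> diffop \<Rightarrow> diffop" where
  "principal_part M P = (\<lambda>m. if pt m \<in> core M then P m else 0)"

end

theory Submission
  imports Defs
begin

lemma adm_char:
  assumes "admissible M L"
  shows "\<exists>a b c. a>0 \<and> b>0 \<and> c>0 \<and> L = {(x,y). a*x+b*y=c} \<and>
           (\<forall>m\<in>M. a*real(fst m)+b*real(snd m) \<le> c)"
proof -
  from assms obtain a b c where ab: "(a,b) \<noteq> (0,0)" and L: "L = {(x, y). a * x + b * y = c}"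
    unfolding admissible_def is_line_def by blast
  from assms obtain x0 where x0: "x0>0" "(x0,0) \<in> L" unfolding admissible_def by blast
  from assms obtain y0 where y0: "y0>0" "(0,y0) \<in> L" unfolding admissible_def by blast
  have na: "\<forall>m\<in>M. \<not> strictly_above L (pt m)" using assms unfolding admissible_def by blast
  have ax: "a*x0 = c" using x0 L by simp
  have by0: "b*y0 = c" using y0 L by simp
  have key: "\<exists>a b c. a>0 \<and> b>0 \<and> c>0 \<and> L = {(x,y). a*x+b*y=c}"
  proof (cases "c > 0")
    case True
    then have "a > 0" using ax x0 by (smt (verit) mult_nonpos_nonneg)
    moreover have "b > 0" using by0 y0 True by (smt (verit) mult_nonpos_nonneg)
    ultimately show ?thesis using L True by blast
  next
    case False
    have "c \<noteq> 0" using ax by0 x0 y0 ab by auto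
    then have c: "c < 0" using False by simp
    then have "a < 0" using ax x0 by (smt (verit) mult_nonneg_nonneg)
    moreover have "b < 0" using by0 y0 c by (smt (verit) mult_nonneg_nonneg)
    moreover have "L = {(x,y). (-a)*x+(-b)*y=(-c)}" using L by auto
    ultimately show ?thesis using c by (intro exI[of _ "-a"] exI[of _ "-b"] exI[of _ "-c"]) auto
  qed
  then obtain a b c where abc: "a>0" "b>0" "c>0" "L = {(x,y). a*x+b*y=c}" by blast
  have "\<forall>m\<in>M. a*real(fst m)+b*real(snd m) \<le> c"
  proof
    fix m assume "m \<in> M"
    then have ns: "\<not> strictly_above L (pt m)" using na by blast
    show "a*real(fst m)+b*real(snd m) \<le> c"
    proof (rule ccontr)
      assume h: "\<not> ?thesis"
      define y' where "y' = (c - a*real(fst m))/b"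
      have "b*y' = c - a*real(fst m)" using abc(2) unfolding y'_def by simp
      then have "(real (fst m), y') \<in> L" using abc(4) by (simp add: algebra_simps)
      moreover have "y' < real (snd m)"
      proof -
        have "b*y' < b*real(snd m)" using h \<open>b*y' = _\<close> by linarith
        thus ?thesis using abc(2) by simp
      qed
      ultimately show False using ns unfolding strictly_above_def pt_def by auto
    qed
  qed
  thus ?thesis using abc by blast
qed

lemma adm_intro:
  assumes "A>0" "B>0" "C>0" "\<forall>m\<in>M. A*real(fst m)+B*real(snd m) \<le> C"
    "p\<in>M" "q\<in>M" "p\<noteq>q" "A*real(fst p)+B*real(snd p) = C" "A*real(fst q)+B*real(snd q) = C"
  shows "admissible M {(x,y). A*x+B*y=C}"
proof -
  have "is_line {(x,y). A*x+B*y=C}" unfolding is_line_def using assms(1) by (intro exI[of _ A] exI[of _ B] exI[of _ C]) auto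
  moreover have "\<exists>m1\<in>M. \<exists>m2\<in>M. m1 \<noteq> m2 \<and> pt m1 \<in> {(x,y). A*x+B*y=C} \<and> pt m2 \<in> {(x,y). A*x+B*y=C}"
    using assms(5-9) unfolding pt_def by auto
  moreover have "\<exists>x>0. (x, 0) \<in> {(x,y). A*x+B*y=C}"
    by (rule exI[of _ "C/A"]) (use assms(1,3) in auto)
  moreover have "\<exists>y>0. (0, y) \<in> {(x,y). A*x+B*y=C}"
    by (rule exI[of _ "C/B"]) (use assms(2,3) in auto)
  moreover have "\<forall>m\<in>M. \<not> strictly_above {(x,y). A*x+B*y=C} (pt m)"
  proof (intro ballI notI)
    fix m assume m: "m \<in> M" and "strictly_above {(x,y). A*x+B*y=C} (pt m)"
    then obtain y' where "A*real(fst m) + B*y' = C" "y' < real (snd m)"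
      unfolding strictly_above_def pt_def by auto
    moreover have "B*y' < B*real(snd m)" using calculation(2) assms(2) by simp
    moreover have "A*real(fst m)+B*real(snd m) \<le> C" using assms(4) m by blast
    ultimately show False by linarith
  qed
  ultimately show ?thesis unfolding admissible_def by blast
qed

definition UU :: "(nat \<times> nat) set \<Rightarrow> (nat \<times> nat) set" where
  "UU M = {m\<in>M. \<exists>L. admissible M L \<and> pt m \<in> L}"

lemma U_fun:
  assumes "m \<in> UU M"
  shows "\<exists>a b c. a>0 \<and> b>0 \<and> a*real(fst m)+b*real(snd m) = c \<and>
           (\<forall>m'\<in>M. a*real(fst m')+b*real(snd m') \<le> c)"
proof -
  obtain L where L: "admissible M L" "pt m \<in> L" using assms unfolding UU_def by blast
  from adm_char[OF L(1)] obtain a b c where "a>0" "b>0" "L = {(x,y). a*x+b*y=c}"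
    "\<forall>m\<in>M. a*real(fst m)+b*real(snd m) \<le> c" by blast
  thus ?thesis using L(2) unfolding pt_def by auto
qed

lemma chain:
  assumes fin: "finite M"
    and same: "\<And>L p q. admissible M L \<Longrightarrow> p\<in>M \<Longrightarrow> q\<in>M \<Longrightarrow> pt p \<in> L \<Longrightarrow> pt q \<in> L \<Longrightarrow> R p q"
    and trans: "\<And>p v q. R p v \<Longrightarrow> R v q \<Longrightarrow> v \<in> M \<Longrightarrow> R p q"
  shows "p \<in> UU M \<Longrightarrow> q \<in> UU M \<Longrightarrow> fst p < fst q \<Longrightarrow> R p q"
proof (induction "fst q - fst p" arbitrary: p rule: less_induct)
  case less
  have pM: "p \<in> M" and qM: "q \<in> M" using less.prems unfolding UU_def by auto
  obtain a b c where abc: "a>0" "b>0" "a*real(fst p)+b*real(snd p) = c"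
    "\<forall>m'\<in>M. a*real(fst m')+b*real(snd m') \<le> c" using U_fun[OF less.prems(1)] by blast
  obtain a2 b2 c2 where abc2: "a2>0" "b2>0" "a2*real(fst q)+b2*real(snd q) = c2"
    "\<forall>m'\<in>M. a2*real(fst m')+b2*real(snd m') \<le> c2" using U_fun[OF less.prems(2)] by blast
  define S where "S = {m\<in>M. fst p < fst m}"
  define f where "f m = (real(snd m) - real(snd p))/(real(fst m) - real(fst p))" for m
  have finS: "finite S" using fin unfolding S_def by simp
  have qS: "q \<in> S" using qM less.prems(3) unfolding S_def by simp
  obtain r where rS: "r \<in> S" and rmax: "\<forall>s\<in>S. f s \<le> f r"
  proof -
    have "Max (f ` S) \<in> f ` S" using finS qS by (intro Max_in) auto
    then obtain r where "r \<in> S" "f r = Max (f ` S)" by auto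
    moreover have "\<forall>s\<in>S. f s \<le> Max (f ` S)" using finS by auto
    ultimately show ?thesis using that by auto
  qed
  have rM: "r \<in> M" and pr: "fst p < fst r" using rS unfolding S_def by auto
  define A where "A = real(snd p) - real(snd r)"
  define B where "B = real(fst r) - real(fst p)"
  define C where "C = A*real(fst p) + B*real(snd p)"
  have B0: "B > 0" using pr unfolding B_def by simp
  have rbelow: "a*real(fst r)+b*real(snd r) \<le> a*real(fst p)+b*real(snd p)"
    using abc rM by auto
  have "a*real(fst p) < a*real(fst r)" using abc(1) pr by simp
  then have "b*real(snd r) < b*real(snd p)" using rbelow by linarith
  then have A0: "A > 0" using abc(2) unfolding A_def by simp
  have aBbA: "a*B \<le> b*A" using rbelow unfolding A_def B_def by (simp add: algebra_simps)
  have C0: "C > 0"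
  proof -
    have "A*real(fst p) \<ge> 0" using A0 by simp
    moreover have "real (snd p) > 0" using A0 unfolding A_def by simp
    then have "B*real(snd p) > 0" using B0 by simp
    ultimately show ?thesis unfolding C_def by linarith
  qed
  have below: "\<forall>m\<in>M. A*real(fst m)+B*real(snd m) \<le> C"
  proof
    fix m assume mM: "m \<in> M"
    have eq: "A*real(fst m)+B*real(snd m) - C = A*(real(fst m) - real(fst p)) + B*(real(snd m) - real(snd p))"
      unfolding C_def by (simp add: algebra_simps)
    have mb: "a*real(fst m)+b*real(snd m) \<le> a*real(fst p)+b*real(snd p)" using abc mM by auto
    consider "fst p < fst m" | "fst m = fst p" | "fst m < fst p" by linarith
    then have "A*(real(fst m) - real(fst p)) + B*(real(snd m) - real(snd p)) \<le> 0"
    proof cases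
      case 1
      then have "m \<in> S" using mM unfolding S_def by simp
      then have "f m \<le> f r" using rmax by blast
      moreover have d1: "real(fst m) - real(fst p) > 0" using 1 by simp
      ultimately have "(real(snd m) - real(snd p)) * B \<le> (real(snd r) - real(snd p)) * (real(fst m) - real(fst p))"
        using B0 unfolding f_def B_def by (simp add: divide_simps)
      thus ?thesis unfolding A_def by (simp add: algebra_simps)
    next
      case 2
      then have "b*real(snd m) \<le> b*real(snd p)" using mb by simp
      then have "real(snd m) - real(snd p) \<le> 0" using abc(2) by simp
      then have "B*(real(snd m) - real(snd p)) \<le> 0" using B0 by (simp add: mult_nonneg_nonpos)
      thus ?thesis using 2 by simp
    next
      case 3
      define d where "d = real(fst p) - real(fst m)"
      have d0: "d > 0" using 3 unfolding d_def by simp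
      have h1: "b*(real(snd m) - real(snd p)) \<le> a*d" using mb unfolding d_def by (simp add: algebra_simps)
      have "b*(B*(real(snd m) - real(snd p))) = B*(b*(real(snd m) - real(snd p)))" by simp
      also have "\<dots> \<le> B*(a*d)" using h1 B0 by (simp add: mult_left_mono)
      also have "\<dots> = (a*B)*d" by simp
      also have "\<dots> \<le> (b*A)*d" using aBbA d0 by (simp add: mult_right_mono)
      also have "\<dots> = b*(A*d)" by simp
      finally have "B*(real(snd m) - real(snd p)) \<le> A*d" using abc(2) by simp
      thus ?thesis unfolding d_def by (simp add: algebra_simps)
    qed
    thus "A*real(fst m)+B*real(snd m) \<le> C" using eq by linarith
  qed
  have pL: "A*real(fst p)+B*real(snd p) = C" unfolding C_def by simp
  have rL: "A*real(fst r)+B*real(snd r) = C" unfolding C_def A_def B_def by (simp add: algebra_simps)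
  have adm: "admissible M {(x,y). A*x+B*y=C}"
    using adm_intro[OF A0 B0 C0 below pM rM _ pL rL] pr by auto
  have Rpr: "R p r" using same[OF adm pM rM] pL rL unfolding pt_def by auto
  show ?case
  proof (cases "fst r < fst q")
    case True
    have rU: "r \<in> UU M" unfolding UU_def using rM adm rL unfolding pt_def by auto
    have "R r q" using less.hyps[of r] True pr rU less.prems by auto
    thus ?thesis using trans Rpr rM by blast
  next
    case False
    define dx1 where "dx1 = real(fst q) - real(fst p)"
    define dx2 where "dx2 = real(fst r) - real(fst q)"
    have dx1: "dx1 > 0" using less.prems(3) unfolding dx1_def by simp
    have dx2: "dx2 \<ge> 0" using False unfolding dx2_def by simp
    have h3: "b2*(real(snd p) - real(snd q)) \<le> a2*dx1" using abc2 pM unfolding dx1_def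
      by (auto simp: algebra_simps)
    have h4: "b2*(real(snd r) - real(snd q)) \<le> -(a2*dx2)" using abc2 rM unfolding dx2_def
      by (auto simp: algebra_simps)
    have "dx1*(b2*(real(snd r) - real(snd q))) \<le> dx1*(-(a2*dx2))"
      using mult_left_mono[OF h4, of dx1] dx1 by simp
    moreover have "dx2*(b2*(real(snd p) - real(snd q))) \<le> dx2*(a2*dx1)"
      using h3 dx2 by (simp add: mult_left_mono)
    ultimately have "b2*(dx1*(real(snd q) - real(snd r)) + dx2*(real(snd q) - real(snd p))) \<ge> 0"
      by (simp add: algebra_simps)
    then have "dx1*(real(snd q) - real(snd r)) + dx2*(real(snd q) - real(snd p)) \<ge> 0"
      using abc2(2) by (simp add: zero_le_mult_iff)
    then have "A*real(fst q)+B*real(snd q) \<ge> C"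
      unfolding A_def B_def C_def dx1_def dx2_def by (simp add: algebra_simps)
    then have qL: "A*real(fst q)+B*real(snd q) = C" using below qM by fastforce
    show ?thesis using same[OF adm pM qM] pL qL unfolding pt_def by auto
  qed
qed

lemma convex_line: "convex {(x::real, y::real). a*x+b*y=c}"
proof -
  have "{(x::real, y::real). a*x+b*y=c} = {z. inner (a,b) z = c}" by auto
  thus ?thesis using convex_hyperplane by metis
qed

lemma pt_inj: "pt x = pt y \<Longrightarrow> x = y"
  unfolding pt_def by (simp add: prod_eq_iff)

theorem lemma1:
  fixes l :: nat and T :: "nat \<Rightarrow> diffop"
  assumes fin: "\<forall>j<l. finite {m. T j m \<noteq> 0}"
    and nonempty: "biindices l T \<noteq> {}"
    and senior: "\<forall>L. admissible (biindices l T) L \<longrightarrow>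
        (\<exists>q :: diffop. \<forall>j<l. \<exists>c :: complex. senior_part L (T j) = (\<lambda>m. c * q m))"
  shows "\<exists>P :: diffop. finite {m. P m \<noteq> 0} \<and>
           (\<forall>j<l. \<exists>c :: complex. principal_part (biindices l T) (T j) = (\<lambda>m. c * P m))"
proof -
  define M where "M = biindices l T"
  define R where "R p q \<longleftrightarrow> (\<forall>j<l. \<forall>k<l. T j p * T k q = T j q * T k p)" for p q
  have finM: "finite M"
  proof -
    have "M = (\<Union>j\<in>{..<l}. {m. T j m \<noteq> 0})" unfolding M_def biindices_def by auto
    thus ?thesis using fin by simp
  qed
  have same: "R p q" if hL: "admissible M L" "p\<in>M" "q\<in>M" "pt p \<in> L" "pt q \<in> L" for L p q
  proof -
    obtain Q where Q: "\<forall>j<l. \<exists>c. senior_part L (T j) = (\<lambda>m. c * Q m)"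
      using senior hL(1) unfolding M_def by blast
    show ?thesis unfolding R_def
    proof (intro allI impI)
      fix j k assume jk: "j < l" "k < l"
      obtain cj where cj: "senior_part L (T j) = (\<lambda>m. cj * Q m)" using Q jk by blast
      obtain ck where ck: "senior_part L (T k) = (\<lambda>m. ck * Q m)" using Q jk by blast
      have "\<And>m. pt m \<in> L \<Longrightarrow> T j m = cj * Q m"
        using fun_cong[OF cj] unfolding senior_part_def by metis
      moreover have "\<And>m. pt m \<in> L \<Longrightarrow> T k m = ck * Q m"
        using fun_cong[OF ck] unfolding senior_part_def by metis
      ultimately show "T j p * T k q = T j q * T k p" using hL(4,5) by simp
    qed
  qed
  have trans: "R p q" if hT: "R p v" "R v q" "v \<in> M" for p v q
  proof -
    obtain j0 where j0: "j0 < l" "T j0 v \<noteq> 0" using hT(3) unfolding M_def biindices_def by auto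
    show ?thesis unfolding R_def
    proof (intro allI impI)
      fix j k assume jk: "j < l" "k < l"
      have e1: "T j p * T j0 v = T j v * T j0 p" using hT(1) jk j0 unfolding R_def by blast
      have e2: "T j v * T k q = T j q * T k v" using hT(2) jk j0 unfolding R_def by blast
      have e3: "T j0 p * T k v = T j0 v * T k p" using hT(1) jk j0 unfolding R_def by blast
      have "(T j p * T k q) * T j0 v = (T j p * T j0 v) * T k q" by (simp add: algebra_simps)
      also have "\<dots> = T j0 p * (T j v * T k q)" using e1 by (simp add: algebra_simps)
      also have "\<dots> = T j q * (T j0 p * T k v)" using e2 by (simp add: algebra_simps)
      also have "\<dots> = (T j q * T k p) * T j0 v" using e3 by (simp add: algebra_simps)
      finally show "T j p * T k q = T j q * T k p" using j0(2) by simp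
    qed
  qed
  have Rsym: "R p q \<Longrightarrow> R q p" for p q unfolding R_def by (metis mult.commute)
  have Rrefl: "R p p" for p unfolding R_def by (simp add: mult.commute)
  have RU: "R p q" if hU: "p \<in> UU M" "q \<in> UU M" for p q
  proof -
    have ch: "\<And>p q. p \<in> UU M \<Longrightarrow> q \<in> UU M \<Longrightarrow> fst p < fst q \<Longrightarrow> R p q"
      using chain[OF finM, of R] same trans by blast
    consider "fst p < fst q" | "fst q < fst p" | "fst p = fst q" by linarith
    then show ?thesis
    proof cases
      case 1 thus ?thesis using ch hU by blast
    next
      case 2 thus ?thesis using ch hU Rsym by blast
    next
      case 3
      obtain a b c where abc: "a>0" "b>0" "a*real(fst p)+b*real(snd p) = c"
        "\<forall>m'\<in>M. a*real(fst m')+b*real(snd m') \<le> c" using U_fun[OF hU(1)] by blast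
      obtain a2 b2 c2 where abc2: "a2>0" "b2>0" "a2*real(fst q)+b2*real(snd q) = c2"
        "\<forall>m'\<in>M. a2*real(fst m')+b2*real(snd m') \<le> c2" using U_fun[OF hU(2)] by blast
      have "q \<in> M" "p \<in> M" using hU unfolding UU_def by auto
      then have "b*real(snd q) \<le> b*real(snd p)" "b2*real(snd p) \<le> b2*real(snd q)"
        using abc abc2 3 by force+
      then have "snd p = snd q" using abc(2) abc2(2) by simp
      then have "p = q" using 3 by (simp add: prod_eq_iff)
      thus ?thesis using Rrefl by simp
    qed
  qed
  define D where "D = {m\<in>M. \<forall>m'\<in>M. fst m' \<le> fst m \<and> snd m' \<le> snd m}"
  define V where "V = (if \<exists>L. admissible M L then UU M else D)"
  have RV: "R p q" if "p \<in> V" "q \<in> V" for p q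
  proof (cases "\<exists>L. admissible M L")
    case True thus ?thesis using RU that unfolding V_def by simp
  next
    case False
    then have "V = D" unfolding V_def by auto
    then have "p \<in> D" "q \<in> D" using that by auto
    then have "p = q" unfolding D_def by (auto simp: prod_eq_iff intro: antisym)
    thus ?thesis using Rrefl by simp
  qed
  have TM: "T j m \<noteq> 0 \<Longrightarrow> j < l \<Longrightarrow> m \<in> M" for j m unfolding M_def biindices_def by auto
  have PP: "principal_part M (T j) = (\<lambda>m. if m \<in> V then T j m else 0)" if j: "j < l" for j
  proof
    fix m
    show "principal_part M (T j) m = (if m \<in> V then T j m else 0)"
    proof (cases "T j m = 0")
      case True thus ?thesis unfolding principal_part_def by simp
    next
      case False
      then have mM: "m \<in> M" using TM j by blast
      have "pt m \<in> core M \<longleftrightarrow> m \<in> V"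
      proof (cases "\<exists>L. admissible M L")
        case True
        have V: "V = UU M" using True unfolding V_def by simp
        have core: "core M = (\<Union>L\<in>{L. admissible M L}. convex hull (pt ` (M \<inter> {m. pt m \<in> L})))"
          using True unfolding core_def by simp
        show ?thesis
        proof
          assume "pt m \<in> core M"
          then obtain L where L: "admissible M L" "pt m \<in> convex hull (pt ` (M \<inter> {m. pt m \<in> L}))"
            using core by auto
          obtain a b c where "L = {(x,y). a*x+b*y=c}" using adm_char[OF L(1)] by blast
          then have "convex L" using convex_line by simp
          moreover have "pt ` (M \<inter> {m. pt m \<in> L}) \<subseteq> L" by auto
          ultimately have "convex hull (pt ` (M \<inter> {m. pt m \<in> L})) \<subseteq> L" by (rule hull_minimal[rotated])
          then have "pt m \<in> L" using L(2) by blast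
          thus "m \<in> V" using V mM L(1) unfolding UU_def by blast
        next
          assume "m \<in> V"
          then obtain L where L: "admissible M L" "pt m \<in> L" using V unfolding UU_def by blast
          have "pt m \<in> pt ` (M \<inter> {m. pt m \<in> L})" using mM L by blast
          then have "pt m \<in> convex hull (pt ` (M \<inter> {m. pt m \<in> L}))" by (rule hull_inc)
          thus "pt m \<in> core M" using core L(1) by blast
        qed
      next
        case False
        then have "core M = pt ` D" unfolding core_def D_def by auto
        moreover have "V = D" using False unfolding V_def by auto
        ultimately show ?thesis using pt_inj by blast
      qed
      thus ?thesis unfolding principal_part_def by simp
    qed
  qed
  show ?thesis
  proof (cases "\<exists>j0<l. \<exists>m0\<in>V. T j0 m0 \<noteq> 0")
    case True
    then obtain j0 m0 where j0: "j0 < l" "m0 \<in> V" "T j0 m0 \<noteq> 0" by blast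
    define P where "P = (\<lambda>m. if m \<in> V then T j0 m else 0)"
    have "{m. P m \<noteq> 0} \<subseteq> {m. T j0 m \<noteq> 0}" unfolding P_def by auto
    then have "finite {m. P m \<noteq> 0}" using fin j0(1) finite_subset by blast
    moreover have "\<exists>c. principal_part M (T k) = (\<lambda>m. c * P m)" if k: "k < l" for k
    proof (intro exI[of _ "T k m0 / T j0 m0"])
      show "principal_part M (T k) = (\<lambda>m. T k m0 / T j0 m0 * P m)"
      proof
        fix m
        show "principal_part M (T k) m = T k m0 / T j0 m0 * P m"
        proof (cases "m \<in> V")
          case True
          have "T j0 m0 * T k m = T j0 m * T k m0" using RV[OF j0(2) True] j0(1) k unfolding R_def by blast
          then have "T k m = T k m0 / T j0 m0 * T j0 m" using j0(3) by (simp add: field_simps)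
          thus ?thesis using PP[OF k] True unfolding P_def by simp
        next
          case False thus ?thesis using PP[OF k] unfolding P_def by simp
        qed
      qed
    qed
    ultimately show ?thesis unfolding M_def by blast
  next
    case False
    have "principal_part M (T k) = (\<lambda>m. 0 * (0::complex))" if "k < l" for k
      using PP[OF that] False that by auto
    then show ?thesis unfolding M_def by (intro exI[of _ "\<lambda>m. 0"]) auto
  qed
qed

end
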